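(* Let $\lambda>0$ and $\theta\in(0,\pi/2)$. For each $m>0$ set $n=m\tan\theta$, $X=(\lambda,0)$, $Y=(0,0)$, $Z=(m,n)$, and let $\varphi_m(\alpha,\beta)=\frac12(\alpha^2+2b\alpha\beta+a\beta^2)+c\alpha+d\beta$ be the conic satisfying (P1) $\varphi_m(X)=\varphi_m(Y)=\varphi_m(Z)=0$ and (P2) $Y-X$ is a positive multiple of $-\nabla\varphi_m(X)$ and $Z-Y$ is a positive multiple of $-\nabla\varphi_m(Y)$. Call $\{\varphi_m=0\}$ admissible if it is an ellipse. Then the set of centers of all admissible ellipses (over all $m>0$) is the semiline $$\mathcal{C}=\Big\{(u,v)\in\mathbb{R}^2:\ u=\frac{\lambda}{2}-\frac{\tan\theta}{2}v,\ v\in(0,+\infty)\Big\}.$$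
   Context: The center of an ellipse $\{\varphi=0\}$ is the point where $\nabla\varphi=0$. *)

theory Defs
  imports "HOL-Analysis.Analysis"
begin

definition conic :: "real \<Rightarrow> real \<Rightarrow> real \<Rightarrow> real \<Rightarrow> real \<times> real \<Rightarrow> real" where
  "conic a b c d = (\<lambda>(x, y). (x\<^sup>2 + 2 * b * x * y + a * y\<^sup>2) / 2 + c * x + d * y)"

definition grad :: "(real \<times> real \<Rightarrow> real) \<Rightarrow> real \<times> real \<Rightarrow> real \<times> real" where
  "grad f p = (SOME g. (f has_derivative (\<lambda>h. g \<bullet> h)) (at p))"

text \<open>A (nondegenerate) ellipse in the plane: a set of the form
  {x. (x - p)^T M (x - p) = 1} with M symmetric positive definite.\<close>
definition is_ellipse :: "(real \<times> real) set \<Rightarrow> bool" where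
  "is_ellipse S \<longleftrightarrow> (\<exists>p A B C. A > 0 \<and> A * C - B\<^sup>2 > 0 \<and>
     S = {x. A * (fst x - fst p)\<^sup>2 + 2 * B * (fst x - fst p) * (snd x - snd p)
             + C * (snd x - snd p)\<^sup>2 = 1})"

end

theory Submission
  imports Defs
begin


lemma conic_apply: "conic a b c d (x, y) = (x\<^sup>2 + 2 * b * x * y + a * y\<^sup>2) / 2 + c * x + d * y"
  by (simp add: conic_def)

lemma conic_deriv:
  "(conic a b c d has_derivative (\<lambda>h. (fst p + b * snd p + c, b * fst p + a * snd p + d) \<bullet> h)) (at p)"
proof -
  have e: "conic a b c d = (\<lambda>z. ((fst z)\<^sup>2 + 2 * b * fst z * snd z + a * (snd z)\<^sup>2) / 2 + c * fst z + d * snd z)"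
    by (auto simp: conic_def)
  show ?thesis unfolding e
    apply (rule derivative_eq_intros refl | simp)+
    apply (auto simp: inner_prod_def algebra_simps power2_eq_square fun_eq_iff)
    done
qed

lemma grad_unique:
  assumes "(f has_derivative (\<lambda>h. g \<bullet> h)) (at p)"
  shows "grad f p = g"
proof -
  have ex: "\<exists>g. (f has_derivative (\<lambda>h. g \<bullet> h)) (at p)" using assms by blast
  have "(f has_derivative (\<lambda>h. grad f p \<bullet> h)) (at p)"
    unfolding grad_def by (rule someI_ex[OF ex])
  then have "(\<lambda>h. grad f p \<bullet> h) = (\<lambda>h. g \<bullet> h)"
    using assms by (rule has_derivative_unique)
  then have "grad f p \<bullet> (grad f p - g) = g \<bullet> (grad f p - g)" by metis
  then have "(grad f p - g) \<bullet> (grad f p - g) = 0" by (simp add: inner_diff_left)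
  then show ?thesis by simp
qed

lemma grad_conic: "grad (conic a b c d) p = (fst p + b * snd p + c, b * fst p + a * snd p + d)"
  by (rule grad_unique[OF conic_deriv])


lemma not_ellipse:
  assumes l: "l > 0" and b: "b > 0" and ab: "a \<le> b\<^sup>2"
  shows "\<not> is_ellipse {x. conic a b (-l/2) (-b*l) x = 0}"
proof
  assume "is_ellipse {x. conic a b (-l/2) (-b*l) x = 0}"
  then obtain p A B C where A: "A > 0" and D: "A * C - B\<^sup>2 > 0" and
    S: "{x. conic a b (-l/2) (-b*l) x = 0} = {x. A * (fst x - fst p)\<^sup>2 + 2 * B * (fst x - fst p) * (snd x - snd p)
             + C * (snd x - snd p)\<^sup>2 = 1}"
    unfolding is_ellipse_def by blast
  define y where "y = \<bar>snd p\<bar> + sqrt (A / (A * C - B\<^sup>2)) + 1"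
  have q0: "A / (A * C - B\<^sup>2) \<ge> 0" using A D by simp
  have y0: "y \<ge> 0" unfolding y_def using q0 by (simp add: add_nonneg_nonneg)
  define R where "R = (b\<^sup>2 - a) * y\<^sup>2 + b * l * y"
  have R0: "R \<ge> 0" unfolding R_def using ab b l y0 by simp
  define s where "s = sqrt (l\<^sup>2 + 4 * R)"
  have s2: "s\<^sup>2 = l\<^sup>2 + 4 * R" unfolding s_def using R0 by simp
  define u where "u = (l + s) / 2"
  define x where "x = u - b * y"
  have "conic a b (-l/2) (-b*l) (x, y) = 0"
  proof -
    have "u\<^sup>2 - l * u = R" unfolding u_def using s2 by (simp add: power2_eq_square field_simps)
    then show ?thesis unfolding conic_apply x_def R_def by (simp add: power2_eq_square algebra_simps)
  qed
  then have "(x, y) \<in> {x. conic a b (-l/2) (-b*l) x = 0}" by simp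
  then have "(x, y) \<in> {x. A * (fst x - fst p)\<^sup>2 + 2 * B * (fst x - fst p) * (snd x - snd p)
             + C * (snd x - snd p)\<^sup>2 = 1}" using S by blast
  then have E: "A * (x - fst p)\<^sup>2 + 2 * B * (x - fst p) * (y - snd p) + C * (y - snd p)\<^sup>2 = 1"
    by simp
  have "A * (A * (x - fst p)\<^sup>2 + 2 * B * (x - fst p) * (y - snd p) + C * (y - snd p)\<^sup>2)
      = (A * (x - fst p) + B * (y - snd p))\<^sup>2 + (A * C - B\<^sup>2) * (y - snd p)\<^sup>2"
    by (simp add: power2_eq_square algebra_simps)
  then have "(A * C - B\<^sup>2) * (y - snd p)\<^sup>2 \<le> A" using E
    by (metis le_add_same_cancel2 mult_1_right zero_le_power2)
  then have le: "(y - snd p)\<^sup>2 \<le> A / (A * C - B\<^sup>2)" using D by (simp add: field_simps)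
  have "y - snd p \<ge> sqrt (A / (A * C - B\<^sup>2)) + 1" unfolding y_def by simp
  then have g1: "(y - snd p)\<^sup>2 \<ge> (sqrt (A / (A * C - B\<^sup>2)) + 1)\<^sup>2"
    using real_sqrt_ge_zero[OF q0] by (intro power_mono) auto
  have g2: "(sqrt (A / (A * C - B\<^sup>2)) + 1)\<^sup>2 > A / (A * C - B\<^sup>2)"
  proof -
    have w0: "sqrt (A / (A * C - B\<^sup>2)) \<ge> 0" using q0 by simp
    have w2: "(sqrt (A / (A * C - B\<^sup>2)))\<^sup>2 = A / (A * C - B\<^sup>2)" using q0 by simp
    have "(sqrt (A / (A * C - B\<^sup>2)) + 1)\<^sup>2 = (sqrt (A / (A * C - B\<^sup>2)))\<^sup>2 + 2 * sqrt (A / (A * C - B\<^sup>2)) + 1"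
      by (simp add: power2_sum)
    then show ?thesis using w0 w2 by linarith
  qed
  show False using le g1 g2 by linarith
qed


theorem lemma3:
  fixes l \<theta> :: real
  assumes "l > 0" and "0 < \<theta>" and "\<theta> < pi / 2"
  shows "{p. \<exists>m>0. \<exists>a b c d.
            let \<phi> = conic a b c d; X = (l, 0); Y = (0, 0); Z = (m, m * tan \<theta>) in
              \<phi> X = 0 \<and> \<phi> Y = 0 \<and> \<phi> Z = 0 \<and>
              (\<exists>t>0. Y - X = t *\<^sub>R (- grad \<phi> X)) \<and>
              (\<exists>t>0. Z - Y = t *\<^sub>R (- grad \<phi> Y)) \<and>
              is_ellipse {x. \<phi> x = 0} \<and>
              grad \<phi> p = 0}
         = {(u, v). v > 0 \<and> u = l / 2 - tan \<theta> / 2 * v}"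
proof (intro set_eqI iffI)
  have l: "l > 0" using assms by simp
  define k where "k = tan \<theta>"
  have k: "k > 0" unfolding k_def using assms by (simp add: tan_gt_zero)
  {
  fix p
  assume "p \<in> {p. \<exists>m>0. \<exists>a b c d.
            let \<phi> = conic a b c d; X = (l, 0); Y = (0, 0); Z = (m, m * tan \<theta>) in
              \<phi> X = 0 \<and> \<phi> Y = 0 \<and> \<phi> Z = 0 \<and>
              (\<exists>t>0. Y - X = t *\<^sub>R (- grad \<phi> X)) \<and>
              (\<exists>t>0. Z - Y = t *\<^sub>R (- grad \<phi> Y)) \<and>
              is_ellipse {x. \<phi> x = 0} \<and>
              grad \<phi> p = 0}"
  then obtain m a b c d t1 t2 where m: "m > 0" and hX: "conic a b c d (l, 0) = 0"
    and t1: "t1 > 0" "(0, 0) - (l, 0) = t1 *\<^sub>R (- grad (conic a b c d) (l, 0))"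
    and t2: "t2 > 0" "(m, m * k) - (0, 0) = t2 *\<^sub>R (- grad (conic a b c d) (0, 0))"
    and ell: "is_ellipse {x. conic a b c d x = 0}"
    and gp: "grad (conic a b c d) p = 0"
    unfolding mem_Collect_eq Let_def k_def by blast
  have "l * (l + 2 * c) = 0" using hX by (simp add: conic_apply power2_eq_square algebra_simps)
  then have c: "c = - l / 2" using l by simp
  have d: "d = - (b * l)" using t1 by (auto simp: grad_conic)
  have e2: "m = t2 * (l / 2)" "m * k = t2 * (b * l)" using t2 c d by (auto simp: grad_conic)
  have "l * t2 = 2 * m" using e2(1) by (simp add: algebra_simps)
  then have "k * m = (2 * b) * m" using e2(2) by (simp add: algebra_simps)
  then have b: "b = k / 2" using m by simp
  have bpos: "b > 0" using b k by simp
  have ab: "a > b\<^sup>2"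
  proof (rule ccontr)
    assume "\<not> a > b\<^sup>2"
    then have "\<not> is_ellipse {x. conic a b (-l/2) (-b*l) x = 0}"
      using not_ellipse[OF l bpos] by simp
    then show False using ell c d by simp
  qed
  obtain u v where p: "p = (u, v)" by fastforce
  have g1: "u + b * v + c = 0" and g2: "b * u + a * v + d = 0"
    using gp by (auto simp: grad_conic p zero_prod_def)
  have u: "u = l / 2 - k / 2 * v" using g1 b c by simp
  have "(a - b\<^sup>2) * v = b * l / 2" using g2 by (simp add: u b d power2_eq_square algebra_simps)
  then have "v > 0" using ab bpos l
    by (metis diff_gt_0_iff_gt divide_pos_pos mult_pos_pos zero_less_mult_pos zero_less_numeral)
  then show "p \<in> {(u, v). v > 0 \<and> u = l / 2 - tan \<theta> / 2 * v}" using u p k_def by simp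
  }
  {
  fix p
  assume "p \<in> {(u, v). v > 0 \<and> u = l / 2 - tan \<theta> / 2 * v}"
  then obtain u v where p: "p = (u, v)" and v: "v > 0" and u: "u = l / 2 - k / 2 * v"
    unfolding k_def by auto
  define b where "b = k / 2"
  define a where "a = k\<^sup>2 / 4 + k * l / (4 * v)"
  define c where "c = - l / 2"
  define d where "d = - (k * l / 2)"
  define m where "m = l * (1 + k\<^sup>2) / (1 + k\<^sup>2 + a * k\<^sup>2)"
  have apos: "a > 0" unfolding a_def using k l v by (intro add_pos_pos) auto
  have den: "1 + k\<^sup>2 + a * k\<^sup>2 > 0" using apos by (simp add: add_pos_nonneg)
  have m: "m > 0" unfolding m_def using den l by (simp add: add_pos_nonneg)
  have hX: "conic a b c d (l, 0) = 0" unfolding c_def by (simp add: conic_apply power2_eq_square)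
  have hY: "conic a b c d (0, 0) = 0" by (simp add: conic_apply)
  have mden: "m * (1 + k\<^sup>2 + a * k\<^sup>2) = l * (1 + k\<^sup>2)"
    using den unfolding m_def by (simp add: field_simps)
  have hZ: "conic a b c d (m, m * k) = 0"
  proof -
    have "conic a b c d (m, m * k) = m / 2 * (m * (1 + k\<^sup>2 + a * k\<^sup>2) - l * (1 + k\<^sup>2))"
      unfolding conic_apply b_def c_def d_def by (simp add: power2_eq_square algebra_simps)
    then show ?thesis using mden by simp
  qed
  have tX: "(0, 0) - (l, 0) = 2 *\<^sub>R (- grad (conic a b c d) (l, 0))"
    by (simp add: grad_conic b_def c_def d_def)
  have tY: "(m, m * k) - (0, 0) = (2 * m / l) *\<^sub>R (- grad (conic a b c d) (0, 0))"
    using l by (simp add: grad_conic b_def c_def d_def)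
  have gp: "grad (conic a b c d) p = 0"
    using v by (simp add: grad_conic p u a_def b_def c_def d_def field_simps power2_eq_square zero_prod_def)
  define K where "K = l\<^sup>2 / 4 + k * l * v / 4"
  have K: "K > 0" unfolding K_def using k l v by (simp add: add_pos_pos)
  have ident: "2 * conic a b c d (x, y) = ((x - u)\<^sup>2 + 2 * b * (x - u) * (y - v) + a * (y - v)\<^sup>2) - K" for x y
    using v unfolding conic_apply u a_def b_def c_def d_def K_def
    by (simp add: power2_eq_square field_simps)
  have ell: "is_ellipse {x. conic a b c d x = 0}"
    unfolding is_ellipse_def
  proof (intro exI conjI)
    show "1 / K > 0" using K by simp
    show "1 / K * (a / K) - (b / K)\<^sup>2 > 0"
    proof -
      have "1 / K * (a / K) - (b / K)\<^sup>2 = (a - b\<^sup>2) / K\<^sup>2" using K by (simp add: power2_eq_square field_simps)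
      moreover have "a - b\<^sup>2 > 0" unfolding a_def b_def using k l v by (simp add: power2_eq_square)
      ultimately show ?thesis using K by simp
    qed
    show "{x. conic a b c d x = 0} = {x. 1 / K * (fst x - fst (u, v))\<^sup>2 + 2 * (b / K) * (fst x - fst (u, v)) * (snd x - snd (u, v))
             + a / K * (snd x - snd (u, v))\<^sup>2 = 1}"
    proof (intro set_eqI)
      fix z :: "real \<times> real"
      obtain x y where z: "z = (x, y)" by fastforce
      have "conic a b c d (x, y) = 0 \<longleftrightarrow> (x - u)\<^sup>2 + 2 * b * (x - u) * (y - v) + a * (y - v)\<^sup>2 = K"
        using ident[of x y] by linarith
      also have "\<dots> \<longleftrightarrow> 1 / K * (x - u)\<^sup>2 + 2 * (b / K) * (x - u) * (y - v) + a / K * (y - v)\<^sup>2 = 1"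
      proof -
        have "1 / K * (x - u)\<^sup>2 + 2 * (b / K) * (x - u) * (y - v) + a / K * (y - v)\<^sup>2
            = ((x - u)\<^sup>2 + 2 * b * (x - u) * (y - v) + a * (y - v)\<^sup>2) / K"
          by (simp add: add_divide_distrib)
        moreover have "(Q / K = 1) = (Q = K)" for Q using K by (simp add: divide_eq_eq)
        ultimately show ?thesis by presburger
      qed
      finally show "z \<in> {x. conic a b c d x = 0} \<longleftrightarrow> z \<in> {x. 1 / K * (fst x - fst (u, v))\<^sup>2 + 2 * (b / K) * (fst x - fst (u, v)) * (snd x - snd (u, v))
             + a / K * (snd x - snd (u, v))\<^sup>2 = 1}" by (simp add: z)
    qed
  qed
  have t2pos: "2 * m / l > 0" using m l by simp
  show "p \<in> {p. \<exists>m>0. \<exists>a b c d.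
            let \<phi> = conic a b c d; X = (l, 0); Y = (0, 0); Z = (m, m * tan \<theta>) in
              \<phi> X = 0 \<and> \<phi> Y = 0 \<and> \<phi> Z = 0 \<and>
              (\<exists>t>0. Y - X = t *\<^sub>R (- grad \<phi> X)) \<and>
              (\<exists>t>0. Z - Y = t *\<^sub>R (- grad \<phi> Y)) \<and>
              is_ellipse {x. \<phi> x = 0} \<and>
              grad \<phi> p = 0}"
    unfolding mem_Collect_eq Let_def k_def[symmetric]
    using m hX hY hZ tX tY ell gp t2pos by (intro exI[of _ m]) (metis zero_less_numeral)
  }
qed

end
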